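(* Let $k$ be a field, $V$ an infinite-dimensional $k$-vector space, $E=\mathrm{End}_k(V)$, $S\subseteq E$ the two-sided ideal of endomorphisms of finite rank, and $R=k+S\subseteq E$ (where $k$ is identified with scalar multiples of the identity). Then the only two-sided ideals of $R$ are $0$, $S$ and $R$; $R$ is a prime ring which is both right and left almost perfect; the Jacobson radical $J(R)$ is $0$; and $R$ is not semilocal, hence is neither right perfect nor left perfect.
   Context: Rings are associative with identity. A ring $R$ is right (resp. left) almost perfect if $R/I$ is a right (resp. left) perfect ring for every two-sided ideal $I$ of $R$ with $I\neq 0$, $I\neq R$. A ring is semilocal if $R/J(R)$ is semisimple artinian. *)

theory Defs
  imports Main "HOL.Vector_Spaces" "HOL-Algebra.QuotRing"
begin

definition right_ideal :: "'a set \<Rightarrow> ('a, 'b) ring_scheme \<Rightarrow> bool" where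
  "right_ideal I R \<longleftrightarrow> additive_subgroup I R \<and>
     (\<forall>a\<in>I. \<forall>r\<in>carrier R. a \<otimes>\<^bsub>R\<^esub> r \<in> I)"

definition maximal_right_ideal :: "'a set \<Rightarrow> ('a, 'b) ring_scheme \<Rightarrow> bool" where
  "maximal_right_ideal I R \<longleftrightarrow> right_ideal I R \<and> I \<noteq> carrier R \<and>
     (\<forall>K. right_ideal K R \<and> I \<subseteq> K \<and> K \<noteq> carrier R \<longrightarrow> K = I)"

definition jacobson :: "('a, 'b) ring_scheme \<Rightarrow> 'a set" where
  "jacobson R = carrier R \<inter> \<Inter> {I. maximal_right_ideal I R}"

text \<open>Semisimple (artinian) ring: the right regular module R_R is semisimple,
  i.e. every right ideal is a direct summand of R_R.\<close>
definition semisimple_artinian :: "('a, 'b) ring_scheme \<Rightarrow> bool" where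
  "semisimple_artinian R \<longleftrightarrow>
     (\<forall>I. right_ideal I R \<longrightarrow>
        (\<exists>K. right_ideal K R \<and> I \<inter> K = {\<zero>\<^bsub>R\<^esub>} \<and>
             (\<forall>x\<in>carrier R. \<exists>a\<in>I. \<exists>b\<in>K. x = a \<oplus>\<^bsub>R\<^esub> b)))"

definition semilocal :: "('a, 'b) ring_scheme \<Rightarrow> bool" where
  "semilocal R \<longleftrightarrow> semisimple_artinian (R Quot (jacobson R))"

fun rprod :: "('a, 'b) ring_scheme \<Rightarrow> (nat \<Rightarrow> 'a) \<Rightarrow> nat \<Rightarrow> 'a" where
  "rprod R a 0 = a 0"
| "rprod R a (Suc n) = a (Suc n) \<otimes>\<^bsub>R\<^esub> rprod R a n"

fun lprod :: "('a, 'b) ring_scheme \<Rightarrow> (nat \<Rightarrow> 'a) \<Rightarrow> nat \<Rightarrow> 'a" where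
  "lprod R a 0 = a 0"
| "lprod R a (Suc n) = lprod R a n \<otimes>\<^bsub>R\<^esub> a (Suc n)"

text \<open>Bass: R is right perfect iff R/J is semisimple and J is T-nilpotent in the sense
  that a_n ... a_1 = 0 eventually (equivalently MJ \<noteq> M for every nonzero right module M);
  left perfect is the mirror image (a_1 ... a_n = 0 eventually).\<close>
definition right_perfect :: "('a, 'b) ring_scheme \<Rightarrow> bool" where
  "right_perfect R \<longleftrightarrow> semilocal R \<and>
     (\<forall>a. (\<forall>i. a i \<in> jacobson R) \<longrightarrow> (\<exists>n. rprod R a n = \<zero>\<^bsub>R\<^esub>))"

definition left_perfect :: "('a, 'b) ring_scheme \<Rightarrow> bool" where
  "left_perfect R \<longleftrightarrow> semilocal R \<and>
     (\<forall>a. (\<forall>i. a i \<in> jacobson R) \<longrightarrow> (\<exists>n. lprod R a n = \<zero>\<^bsub>R\<^esub>))"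

definition right_almost_perfect :: "('a, 'b) ring_scheme \<Rightarrow> bool" where
  "right_almost_perfect R \<longleftrightarrow>
     (\<forall>I. ideal I R \<and> I \<noteq> {\<zero>\<^bsub>R\<^esub>} \<and> I \<noteq> carrier R \<longrightarrow> right_perfect (R Quot I))"

definition left_almost_perfect :: "('a, 'b) ring_scheme \<Rightarrow> bool" where
  "left_almost_perfect R \<longleftrightarrow>
     (\<forall>I. ideal I R \<and> I \<noteq> {\<zero>\<^bsub>R\<^esub>} \<and> I \<noteq> carrier R \<longrightarrow> left_perfect (R Quot I))"

definition prime_ring :: "('a, 'b) ring_scheme \<Rightarrow> bool" where
  "prime_ring R \<longleftrightarrow> \<zero>\<^bsub>R\<^esub> \<noteq> \<one>\<^bsub>R\<^esub> \<and>
     (\<forall>A B. ideal A R \<and> ideal B R \<and> (\<forall>a\<in>A. \<forall>b\<in>B. a \<otimes>\<^bsub>R\<^esub> b = \<zero>\<^bsub>R\<^esub>)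
        \<longrightarrow> A = {\<zero>\<^bsub>R\<^esub>} \<or> B = {\<zero>\<^bsub>R\<^esub>})"

definition End_ring :: "('k::field \<Rightarrow> 'v::ab_group_add \<Rightarrow> 'v) \<Rightarrow> ('v \<Rightarrow> 'v) ring" where
  "End_ring scale = \<lparr>carrier = {f. Vector_Spaces.linear scale scale f},
     mult = (\<lambda>f g. f \<circ> g), one = id,
     zero = (\<lambda>_. 0), add = (\<lambda>f g x. f x + g x)\<rparr>"

definition finite_rank :: "('k::field \<Rightarrow> 'v::ab_group_add \<Rightarrow> 'v) \<Rightarrow> ('v \<Rightarrow> 'v) \<Rightarrow> bool" where
  "finite_rank scale f \<longleftrightarrow> (\<exists>B. finite B \<and> range f \<subseteq> module.span scale B)"

definition fin_rank_endos :: "('k::field \<Rightarrow> 'v::ab_group_add \<Rightarrow> 'v) \<Rightarrow> ('v \<Rightarrow> 'v) set" where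
  "fin_rank_endos scale = {f. Vector_Spaces.linear scale scale f \<and> finite_rank scale f}"

definition k_plus_S_ring :: "('k::field \<Rightarrow> 'v::ab_group_add \<Rightarrow> 'v) \<Rightarrow> ('v \<Rightarrow> 'v) ring" where
  "k_plus_S_ring scale = (End_ring scale)\<lparr>carrier :=
     {f. \<exists>c s. s \<in> fin_rank_endos scale \<and> f = (\<lambda>x. scale c x + s x)}\<rparr>"

end

theory Submission
  imports Defs
begin

definition divring_like :: "('a,'b) ring_scheme \<Rightarrow> bool" where
 "divring_like A \<longleftrightarrow> ring A \<and> \<zero>\<^bsub>A\<^esub> \<noteq> \<one>\<^bsub>A\<^esub> \<and>
    (\<forall>x\<in>carrier A - {\<zero>\<^bsub>A\<^esub>}. \<exists>y\<in>carrier A. x \<otimes>\<^bsub>A\<^esub> y = \<one>\<^bsub>A\<^esub>)"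

lemma dl_right_ideal:
  fixes A (structure)
 
  assumes d: "divring_like A" and I: "right_ideal I A"
  shows "I = {\<zero>\<^bsub>A\<^esub>} \<or> I = carrier A"
proof -
  interpret ring A using d by (simp add: divring_like_def)
  have sg: "additive_subgroup I A" and cl: "\<And>a r. a \<in> I \<Longrightarrow> r \<in> carrier A \<Longrightarrow> a \<otimes> r \<in> I"
    using I by (auto simp: right_ideal_def)
  have sub: "I \<subseteq> carrier A" using additive_subgroup.a_subset[OF sg] .
  have z: "\<zero> \<in> I" using additive_subgroup.zero_closed[OF sg] .
  show ?thesis
  proof (cases "I = {\<zero>}")
    case False
    then obtain x where x: "x \<in> I" "x \<noteq> \<zero>" using z by blast
    then obtain y where y: "y \<in> carrier A" "x \<otimes> y = \<one>" using d sub by (auto simp: divring_like_def)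
    have "\<one> \<in> I" using cl[OF x(1) y(1)] y(2) by simp
    then have "carrier A \<subseteq> I" using cl[of \<one>] by force
    then show ?thesis using sub by auto
  qed simp
qed

lemma zero_right_ideal: fixes A (structure) assumes "ring A" shows "right_ideal {\<zero>\<^bsub>A\<^esub>} A"
proof -
  interpret ring A by fact
  have "ideal {\<zero>} A" by (rule zeroideal)
  then show ?thesis unfolding right_ideal_def using ideal.axioms(1) by fastforce
qed

lemma dl_jacobson:
  fixes A (structure)
  assumes d: "divring_like A" shows "jacobson A = {\<zero>\<^bsub>A\<^esub>}"
proof -
  interpret ring A using d by (simp add: divring_like_def)
  have ne: "{\<zero>} \<noteq> carrier A"
  proof
    assume "{\<zero>} = carrier A"
    then have "\<one> = \<zero>" using one_closed by auto
    then show False using d by (simp add: divring_like_def)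
  qed
  have "{I. maximal_right_ideal I A} = {{\<zero>}}"
    using dl_right_ideal[OF d] zero_right_ideal[OF ring_axioms] ne
    unfolding maximal_right_ideal_def by auto
  then show ?thesis unfolding jacobson_def by auto
qed

lemma dl_ssa:
  fixes A (structure)
  assumes d: "divring_like A" shows "semisimple_artinian A"
  unfolding semisimple_artinian_def
proof (intro allI impI)
  interpret ring A using d by (simp add: divring_like_def)
  fix I assume I: "right_ideal I A"
  have rc: "right_ideal (carrier A) A"
    using oneideal ideal.axioms(1) unfolding right_ideal_def by fastforce
  show "\<exists>K. right_ideal K A \<and> I \<inter> K = {\<zero>} \<and> (\<forall>x\<in>carrier A. \<exists>a\<in>I. \<exists>b\<in>K. x = a \<oplus> b)"
  proof (cases "I = {\<zero>}")
    case True
    then show ?thesis using rc by (intro exI[of _ "carrier A"]) force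
  next
    case False
    then have "I = carrier A" using dl_right_ideal[OF d I] by auto
    then show ?thesis using zero_right_ideal[OF ring_axioms]
      by (intro exI[of _ "{\<zero>}"]) force
  qed
qed

lemma dl_quot:
  fixes A (structure)
 
  assumes r: "ring A" and I: "ideal I A" and one: "\<one>\<^bsub>A\<^esub> \<notin> I"
    and inv: "\<And>x. x \<in> carrier A \<Longrightarrow> x \<notin> I \<Longrightarrow> \<exists>y\<in>carrier A. x \<otimes>\<^bsub>A\<^esub> y \<ominus>\<^bsub>A\<^esub> \<one>\<^bsub>A\<^esub> \<in> I"
  shows "divring_like (A Quot I)"
proof -
  interpret ring A by fact
  interpret ideal I A by fact
  have q: "ring (A Quot I)" by (rule quotient_is_ring)
  have zo: "I \<noteq> I +> \<one>" using a_rcos_self[of \<one>] one by auto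
  have "\<exists>Y\<in>carrier (A Quot I). X \<otimes>\<^bsub>A Quot I\<^esub> Y = \<one>\<^bsub>A Quot I\<^esub>"
    if X: "X \<in> carrier (A Quot I)" "X \<noteq> \<zero>\<^bsub>A Quot I\<^esub>" for X
  proof -
    from X obtain x where x: "x \<in> carrier A" "X = I +> x"
      by (auto simp: FactRing_def A_RCOSETS_def' )
    have "x \<notin> I" using X x a_rcos_const by (auto simp: FactRing_def)
    then obtain y where y: "y \<in> carrier A" "x \<otimes> y \<ominus> \<one> \<in> I" using inv x by blast
    have "x \<otimes> y \<in> I +> \<one>" using a_rcos_module_minus[OF r, of \<one> "x \<otimes> y"] y x by auto
    then have e: "I +> \<one> = I +> (x \<otimes> y)" using a_repr_independence' by auto
    have "X \<otimes>\<^bsub>A Quot I\<^esub> (I +> y) = I +> (x \<otimes> y)"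
      using rcoset_mult_add[OF x(1) y(1)] x by (simp add: FactRing_def)
    moreover have "I +> y \<in> carrier (A Quot I)" using y by (auto simp: FactRing_def A_RCOSETS_def')
    ultimately show ?thesis using e by (auto simp: FactRing_def)
  qed
  then show ?thesis using q zo unfolding divring_like_def by (auto simp: FactRing_def)
qed

lemma dl_semilocal:
  fixes A (structure)
  assumes d: "divring_like A" shows "semilocal A"
proof -
  interpret ring A using d by (simp add: divring_like_def)
  have "divring_like (A Quot {\<zero>})"
  proof (rule dl_quot[OF ring_axioms zeroideal])
    show "\<one> \<notin> {\<zero>}" using d by (auto simp: divring_like_def)
    fix x assume "x \<in> carrier A" "x \<notin> {\<zero>}"
    then obtain y where "y \<in> carrier A" "x \<otimes> y = \<one>" using d by (auto simp: divring_like_def)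
    then show "\<exists>y\<in>carrier A. x \<otimes> y \<ominus> \<one> \<in> {\<zero>}" by (metis r_neg minus_eq one_closed singletonI)
  qed
  then show ?thesis unfolding semilocal_def dl_jacobson[OF d] by (rule dl_ssa)
qed

lemma dl_perfect: assumes d: "divring_like A" shows "right_perfect A" "left_perfect A"
  using dl_semilocal[OF d] dl_jacobson[OF d]
  unfolding right_perfect_def left_perfect_def
  by (auto intro!: exI[of _ 0])


context vector_space begin

abbreviation Lin where "Lin f \<equiv> Vector_Spaces.linear scale scale f"

lemma Lin_iff: "Lin f \<longleftrightarrow> (\<forall>x y. f (x + y) = f x + f y) \<and> (\<forall>c x. f (c *s x) = c *s f x)"
  using Vector_Spaces.linear_iff[of scale scale f] vector_space_axioms by auto

lemma Lin_add: "Lin f \<Longrightarrow> Lin g \<Longrightarrow> Lin (\<lambda>x. f x + g x)"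
  unfolding Lin_iff by (simp add: scale_right_distrib)

lemma Lin_scale: "Lin f \<Longrightarrow> Lin (\<lambda>x. c *s f x)"
  unfolding Lin_iff by (simp add: scale_right_distrib)

lemma Lin_comp: "Lin f \<Longrightarrow> Lin g \<Longrightarrow> Lin (\<lambda>x. f (g x))"
  unfolding Lin_iff by simp

lemma Lin_id: "Lin (\<lambda>x. x)" unfolding Lin_iff by simp
lemma Lin_zero: "Lin (\<lambda>x. 0)" unfolding Lin_iff by simp
lemma Lin_sc: "Lin (\<lambda>x. c *s x)" unfolding Lin_iff by (simp add: scale_right_distrib)

lemma Lin_0: "Lin f \<Longrightarrow> f 0 = 0"
  unfolding Lin_iff by (metis add_cancel_right_right)

lemma Lin_span: "Lin l \<Longrightarrow> l ` span B = span (l ` B)"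
  using module_hom.span_image[of scale scale l B] module_hom_iff_linear by metis

abbreviation fr where "fr f \<equiv> finite_rank scale f"

lemma fr_zero: "fr (\<lambda>x. 0)"
  unfolding finite_rank_def by (auto intro!: exI[of _ "{}"])

lemma fr_add: "fr f \<Longrightarrow> fr g \<Longrightarrow> fr (\<lambda>x. f x + g x)"
  unfolding finite_rank_def
proof (elim exE conjE)
  fix B1 B2 assume "finite B1" "range f \<subseteq> span B1" "finite B2" "range g \<subseteq> span B2"
  then show "\<exists>B. finite B \<and> range (\<lambda>x. f x + g x) \<subseteq> span B"
    using span_mono[of B1 "B1 \<union> B2"] span_mono[of B2 "B1 \<union> B2"]
    by (intro exI[of _ "B1 \<union> B2"]) (auto intro!: span_add)
qed

lemma fr_compL: "Lin l \<Longrightarrow> fr f \<Longrightarrow> fr (\<lambda>x. l (f x))"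
  unfolding finite_rank_def
proof (elim exE conjE)
  fix B assume l: "Lin l" and "finite B" "range f \<subseteq> span B"
  then have "range (\<lambda>x. l (f x)) \<subseteq> l ` span B" by auto
  with l \<open>finite B\<close> show "\<exists>B. finite B \<and> range (\<lambda>x. l (f x)) \<subseteq> span B"
    by (intro exI[of _ "l ` B"]) (simp add: Lin_span)
qed

lemma fr_compR: "fr f \<Longrightarrow> fr (\<lambda>x. f (g x))"
  unfolding finite_rank_def by auto

lemma fr_scale: "fr f \<Longrightarrow> fr (\<lambda>x. c *s f x)"
  using fr_compL[OF Lin_sc] .

lemma fr_single: "fr (\<lambda>x. h x *s v)"
  unfolding finite_rank_def
  by (auto intro!: exI[of _ "{v}"] span_scale[OF span_base])

lemma not_fr_id: assumes "\<not> (\<exists>B. finite B \<and> span B = UNIV)" shows "\<not> fr (\<lambda>x. x)"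
  using assms unfolding finite_rank_def by auto

definition BB where "BB = (SOME B. independent B \<and> span B = UNIV)"

lemma BB: "independent BB" "span BB = UNIV"
proof -
  obtain B where "independent B" "UNIV \<subseteq> span B" using basis_exists[of UNIV] by metis
  then have "\<exists>B. independent B \<and> span B = UNIV" by auto
  from someI_ex[OF this] show "independent BB" "span BB = UNIV" unfolding BB_def by auto
qed

definition coord where "coord x b = representation BB x b"

lemma coord_add: "coord (x + y) b = coord x b + coord y b"
  unfolding coord_def using representation_add[OF BB(1)] BB(2) by auto

lemma coord_scale: "coord (c *s x) b = c * coord x b"
  unfolding coord_def using representation_scale[OF BB(1)] BB(2) by auto

lemma coord_diff: "coord (x - y) b = coord x b - coord y b"
  unfolding coord_def using representation_diff[OF BB(1)] BB(2) by auto

lemma coord_zero: "coord 0 b = 0"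
  unfolding coord_def using representation_zero by auto

lemma coord_basis: "b' \<in> BB \<Longrightarrow> coord b' b = (if b = b' then 1 else 0)"
  unfolding coord_def using representation_basis[OF BB(1)] by auto

lemma coord_fin: "finite {b. coord x b \<noteq> 0}"
  unfolding coord_def by (rule finite_representation)

lemma coord_in: "coord x b \<noteq> 0 \<Longrightarrow> b \<in> BB"
  unfolding coord_def by (rule representation_ne_zero)

lemma coord_sum: assumes "finite F" "{b. coord x b \<noteq> 0} \<subseteq> F"
  shows "(\<Sum>b\<in>F. coord x b *s b) = x"
proof -
  have "(\<Sum>b\<in>F. coord x b *s b) = (\<Sum>b | coord x b \<noteq> 0. coord x b *s b)"
    by (rule sum.mono_neutral_cong_right) (use assms in auto)
  also have "\<dots> = x" unfolding coord_def
    using sum_nonzero_representation_eq[OF BB(1)] BB(2) by auto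
  finally show ?thesis .
qed

lemma coord_ext: "(\<And>b. coord x b = 0) \<Longrightarrow> x = 0"
  using coord_sum[of "{}" x] by auto

lemma BB_nz: "b \<in> BB \<Longrightarrow> b \<noteq> 0"
  using BB(1) dependent_zero by blast

lemma BB_inf: assumes "\<not> (\<exists>B. finite B \<and> span B = UNIV)" shows "infinite BB"
  using assms BB(2) by auto

lemma Lin_coord: "Lin (\<lambda>x. coord x b *s v)"
  unfolding Lin_iff by (simp add: coord_add coord_scale scale_left_distrib)

abbreviation RR where "RR \<equiv> k_plus_S_ring scale"
abbreviation SS where "SS \<equiv> fin_rank_endos scale"

lemma carrier_RR: "carrier RR = {f. \<exists>c s. s \<in> SS \<and> f = (\<lambda>x. c *s x + s x)}"
  by (simp_all add: k_plus_S_ring_def End_ring_def)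

lemma RR_simps[simp]: "mult RR = (\<lambda>f g. f \<circ> g)" "one RR = id" "zero RR = (\<lambda>_. 0)" "add RR = (\<lambda>f g x. f x + g x)"
  by (simp_all add: k_plus_S_ring_def End_ring_def)

lemma SS_iff: "s \<in> SS \<longleftrightarrow> Lin s \<and> fr s" by (simp add: fin_rank_endos_def)

lemma SS_zero: "(\<lambda>x. 0) \<in> SS" by (simp add: SS_iff Lin_zero fr_zero)
lemma SS_add: "s \<in> SS \<Longrightarrow> t \<in> SS \<Longrightarrow> (\<lambda>x. s x + t x) \<in> SS"
  by (simp add: SS_iff Lin_add fr_add)
lemma SS_compL: "Lin l \<Longrightarrow> s \<in> SS \<Longrightarrow> (\<lambda>x. l (s x)) \<in> SS"
  by (simp add: SS_iff Lin_comp fr_compL)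
lemma SS_compR: "Lin l \<Longrightarrow> s \<in> SS \<Longrightarrow> (\<lambda>x. s (l x)) \<in> SS"
  by (simp add: SS_iff Lin_comp fr_compR)
lemma SS_scale: "s \<in> SS \<Longrightarrow> (\<lambda>x. c *s s x) \<in> SS"
  using SS_compL[OF Lin_sc] .
lemma SS_neg: "s \<in> SS \<Longrightarrow> (\<lambda>x. - s x) \<in> SS"
  using SS_scale[of s "-1"] by (simp add: scale_minus_left)
lemma SS_single: "(\<lambda>x. coord x b *s v) \<in> SS"
  by (simp add: SS_iff Lin_coord fr_single)

lemma SS_sub: "s \<in> SS \<Longrightarrow> s \<in> carrier RR"
  unfolding carrier_RR by (auto intro!: exI[of _ 0] exI[of _ s])

lemma RR_Lin: "f \<in> carrier RR \<Longrightarrow> Lin f"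
  unfolding carrier_RR by (auto simp: SS_iff intro!: Lin_add Lin_sc)

lemma RR_add: "f \<in> carrier RR \<Longrightarrow> g \<in> carrier RR \<Longrightarrow> (\<lambda>x. f x + g x) \<in> carrier RR"
  unfolding carrier_RR
proof (clarsimp)
  fix c s d t assume "s \<in> SS" "t \<in> SS"
  then show "\<exists>e u. u \<in> SS \<and> (\<lambda>x. c *s x + s x + (d *s x + t x)) = (\<lambda>x. e *s x + u x)"
    by (intro exI[of _ "c + d"] exI[of _ "\<lambda>x. s x + t x"])
       (auto simp: SS_add scale_left_distrib algebra_simps)
qed

lemma RR_neg: "f \<in> carrier RR \<Longrightarrow> (\<lambda>x. - f x) \<in> carrier RR"
  unfolding carrier_RR
  apply clarsimp
  subgoal for c s
    by (rule exI[of _ "-c"], rule exI[of _ "\<lambda>x. - s x"]) (auto simp: SS_neg scale_minus_left)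
  done

lemma RR_sc: "(\<lambda>x. c *s x) \<in> carrier RR"
  unfolding carrier_RR using SS_zero by (auto intro!: exI[of _ c] exI[of _ "\<lambda>x. 0"])

lemma RR_mult: "f \<in> carrier RR \<Longrightarrow> g \<in> carrier RR \<Longrightarrow> (\<lambda>x. f (g x)) \<in> carrier RR"
  unfolding carrier_RR
proof (clarsimp)
  fix c s d t assume s: "s \<in> SS" and t: "t \<in> SS"
  have l: "Lin (\<lambda>x. d *s x + t x)" using t by (auto simp: SS_iff intro!: Lin_add Lin_sc)
  have "(\<lambda>x. c *s t x + s (d *s x + t x)) \<in> SS"
    by (rule SS_add[OF SS_scale[OF t] SS_compR[OF l s]])
  moreover have "(\<lambda>x. c *s (d *s x + t x) + s (d *s x + t x)) = (\<lambda>x. (c * d) *s x + (c *s t x + s (d *s x + t x)))"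
    by (auto simp: scale_right_distrib)
  ultimately show "\<exists>e u. u \<in> SS \<and> (\<lambda>x. c *s (d *s x + t x) + s (d *s x + t x)) = (\<lambda>x. e *s x + u x)"
    by blast
qed

lemma RR_id: "(\<lambda>x. x) \<in> carrier RR"
  using RR_sc[of 1] by simp

lemma ring_RR: "ring RR"
proof (rule ringI)
  show "abelian_group RR"
    apply (rule abelian_groupI)
    apply (auto simp: RR_add SS_zero SS_sub add.assoc add.commute)
    subgoal for x by (rule bexI[of _ "\<lambda>xa. - x xa"]) (auto simp: RR_neg)
    done
  show "monoid RR"
    by (rule monoidI) (auto simp: RR_mult[unfolded comp_def[symmetric]] RR_id[unfolded id_def[symmetric]])
  fix x y z assume "x \<in> carrier RR" "y \<in> carrier RR" "z \<in> carrier RR"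
  then show "(x \<oplus>\<^bsub>RR\<^esub> y) \<otimes>\<^bsub>RR\<^esub> z = x \<otimes>\<^bsub>RR\<^esub> z \<oplus>\<^bsub>RR\<^esub> y \<otimes>\<^bsub>RR\<^esub> z"
    "z \<otimes>\<^bsub>RR\<^esub> (x \<oplus>\<^bsub>RR\<^esub> y) = z \<otimes>\<^bsub>RR\<^esub> x \<oplus>\<^bsub>RR\<^esub> z \<otimes>\<^bsub>RR\<^esub> y"
    using RR_Lin[of z] by (auto simp: Lin_iff)
qed

lemma RR_ainv: "f \<in> carrier RR \<Longrightarrow> \<ominus>\<^bsub>RR\<^esub> f = (\<lambda>x. - f x)"
  by (rule abelian_group.minus_equality[OF ring.is_abelian_group[OF ring_RR]]) (auto simp: RR_neg)

lemma ideal_SS: "ideal SS RR"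
proof -
  interpret ring RR by (rule ring_RR)
  show ?thesis
  proof (rule idealI[OF ring_RR])
    show "subgroup SS (add_monoid RR)"
      apply (rule add.subgroupI)
      using SS_zero by (auto simp: SS_sub SS_add RR_ainv SS_neg)
    fix a x assume "a \<in> SS" "x \<in> carrier RR"
    then show "x \<otimes>\<^bsub>RR\<^esub> a \<in> SS" "a \<otimes>\<^bsub>RR\<^esub> x \<in> SS"
      using RR_Lin[of x] by (auto simp: comp_def intro: SS_compL SS_compR)
  qed
qed

lemma coord_span: assumes "v \<in> span C" "coord v b \<noteq> 0"
  shows "b \<in> (\<Union>c\<in>C. {b. coord c b \<noteq> 0})"
proof -
  have "\<forall>b. coord v b \<noteq> 0 \<longrightarrow> b \<in> (\<Union>c\<in>C. {b. coord c b \<noteq> 0})"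
    using assms(1)
  proof (induct rule: span_induct_alt)
    case base then show ?case by (simp add: coord_zero)
  next
    case (step c x y) then show ?case by (auto simp: coord_add coord_scale)
  qed
  with assms(2) show ?thesis by blast
qed

lemma SS_fin_coords: assumes "s \<in> SS"
  obtains F where "finite F" "\<And>x. {b. coord (s x) b \<noteq> 0} \<subseteq> F"
proof -
  from assms obtain C where C: "finite C" "range s \<subseteq> span C"
    by (auto simp: SS_iff finite_rank_def)
  let ?F = "\<Union>c\<in>C. {b. coord c b \<noteq> 0}"
  have "finite ?F" using C(1) coord_fin by auto
  moreover have "{b. coord (s x) b \<noteq> 0} \<subseteq> ?F" for x
  proof -
    have "s x \<in> span C" using C(2) by auto
    then show ?thesis using coord_span[of "s x" C] by blast
  qed
  ultimately show ?thesis using that by blast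
qed

lemma e_in_ideal:
  assumes I: "ideal I RR" and f: "f \<in> I" and fu: "f u \<noteq> 0"
  shows "(\<lambda>x. coord x b *s b) \<in> I"
proof -
  interpret ideal I RR by fact
  have fc: "f \<in> carrier RR" using f a_subset by auto
  have fl: "Lin f" by (rule RR_Lin[OF fc])
  obtain b0 where a: "coord (f u) b0 \<noteq> 0" using coord_ext fu by blast
  define \<alpha> where "\<alpha> = coord (f u) b0"
  define L where "L = (\<lambda>y. inverse \<alpha> *s (coord y b0 *s b))"
  define Rf where "Rf = (\<lambda>x. coord x b *s u)"
  have Lc: "L \<in> carrier RR" unfolding L_def by (rule SS_sub[OF SS_scale[OF SS_single]])
  have Rc: "Rf \<in> carrier RR" unfolding Rf_def by (rule SS_sub[OF SS_single])
  have "f \<otimes>\<^bsub>RR\<^esub> Rf \<in> I" using I_r_closed[OF f Rc] .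
  then have "L \<otimes>\<^bsub>RR\<^esub> (f \<otimes>\<^bsub>RR\<^esub> Rf) \<in> I" using I_l_closed Lc by blast
  moreover have "L \<otimes>\<^bsub>RR\<^esub> (f \<otimes>\<^bsub>RR\<^esub> Rf) = (\<lambda>x. coord x b *s b)"
  proof
    fix x
    have "f (Rf x) = coord x b *s f u" unfolding Rf_def using fl by (simp add: Lin_iff)
    then have "(L \<otimes>\<^bsub>RR\<^esub> (f \<otimes>\<^bsub>RR\<^esub> Rf)) x = inverse \<alpha> *s ((coord x b * \<alpha>) *s b)"
      by (simp add: L_def \<alpha>_def coord_scale)
    also have "\<dots> = coord x b *s b" using a by (simp add: \<alpha>_def)
    finally show "(L \<otimes>\<^bsub>RR\<^esub> (f \<otimes>\<^bsub>RR\<^esub> Rf)) x = coord x b *s b" .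
  qed
  ultimately show ?thesis by simp
qed

lemma SS_in_ideal:
  assumes I: "ideal I RR" and f: "f \<in> I" and fz: "f \<noteq> (\<lambda>_. 0)"
  shows "SS \<subseteq> I"
proof
  interpret ideal I RR by fact
  fix s assume s: "s \<in> SS"
  obtain u where fu: "f u \<noteq> 0" using fz by auto
  obtain F where F: "finite F" "\<And>x. {b. coord (s x) b \<noteq> 0} \<subseteq> F" using SS_fin_coords[OF s] by blast
  have sc: "s \<in> carrier RR" using SS_sub[OF s] .
  have "finite F' \<Longrightarrow> (\<lambda>x. \<Sum>b\<in>F'. coord (s x) b *s b) \<in> I" for F'
  proof (induct F' rule: finite_induct)
    case empty show ?case using additive_subgroup.zero_closed[OF is_additive_subgroup] by simp
  next
    case (insert b F')
    have "(\<lambda>x. coord x b *s b) \<otimes>\<^bsub>RR\<^esub> s \<in> I"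
      by (rule I_r_closed[OF e_in_ideal[OF I f fu] sc])
    then have "(\<lambda>x. coord (s x) b *s b) \<oplus>\<^bsub>RR\<^esub> (\<lambda>x. \<Sum>b\<in>F'. coord (s x) b *s b) \<in> I"
      using insert by (intro additive_subgroup.a_closed[OF is_additive_subgroup]) (auto simp: comp_def)
    then show ?case using insert by simp
  qed
  from this[OF F(1)] have "(\<lambda>x. \<Sum>b\<in>F. coord (s x) b *s b) \<in> I" .
  moreover have "(\<lambda>x. \<Sum>b\<in>F. coord (s x) b *s b) = s"
    using coord_sum[OF F(1) F(2)] by auto
  ultimately show "s \<in> I" by simp
qed

end

locale ivs = vector_space +
  assumes inf_dim: "\<not> (\<exists>B. finite B \<and> span B = UNIV)"
begin

lemma id_notin_SS: "(\<lambda>x. x) \<notin> SS"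
  using not_fr_id[OF inf_dim] by (simp add: SS_iff)

lemma BB_ne: "BB \<noteq> {}" using BB_inf[OF inf_dim] by auto

lemma ex_nz: "\<exists>b. b \<in> BB" using BB_ne by auto

lemma ideal_cases: assumes I: "ideal I RR"
  shows "I = {\<lambda>_. 0} \<or> I = SS \<or> I = carrier RR"
proof -
  interpret ideal I RR by fact
  have z: "(\<lambda>_. 0) \<in> I" using additive_subgroup.zero_closed[OF is_additive_subgroup] by simp
  show ?thesis
  proof (cases "I = {\<lambda>_. 0}")
    case False
    then obtain f where f: "f \<in> I" "f \<noteq> (\<lambda>_. 0)" using z by blast
    have SI: "SS \<subseteq> I" by (rule SS_in_ideal[OF I f])
    show ?thesis
    proof (cases "I \<subseteq> SS")
      case True then show ?thesis using SI by auto
    next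
      case False
      then obtain g where g: "g \<in> I" "g \<notin> SS" by auto
      then have "g \<in> carrier RR" using a_subset by auto
      then obtain c t where ct: "t \<in> SS" "g = (\<lambda>x. c *s x + t x)" unfolding carrier_RR by auto
      have c: "c \<noteq> 0" using ct g(2) by auto
      have "\<ominus>\<^bsub>RR\<^esub> t \<in> I" using SI ct(1) by auto
      then have "(\<lambda>x. - t x) \<in> I" using RR_ainv[OF SS_sub[OF ct(1)]] by simp
      then have "g \<oplus>\<^bsub>RR\<^esub> (\<lambda>x. - t x) \<in> I" using g(1) by (intro additive_subgroup.a_closed[OF is_additive_subgroup])
      then have "(\<lambda>x. c *s x) \<in> I" using ct(2) by simp
      then have "(\<lambda>x. inverse c *s x) \<otimes>\<^bsub>RR\<^esub> (\<lambda>x. c *s x) \<in> I" using I_l_closed RR_sc by blast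
      then have "\<one>\<^bsub>RR\<^esub> \<in> I" using c by (simp add: comp_def id_def)
      then show ?thesis using one_imp_carrier by blast
    qed
  qed simp
qed

lemma ideals_RR: "{I. ideal I RR} = {{\<zero>\<^bsub>RR\<^esub>}, SS, carrier RR}"
proof -
  interpret ring RR by (rule ring_RR)
  show ?thesis using ideal_cases zeroideal oneideal ideal_SS by auto
qed

lemma quot_dl: "divring_like (RR Quot SS)"
proof (rule dl_quot[OF ring_RR ideal_SS])
  show "\<one>\<^bsub>RR\<^esub> \<notin> SS" using id_notin_SS by (simp add: id_def)
  fix x assume x: "x \<in> carrier RR" "x \<notin> SS"
  then obtain c t where ct: "t \<in> SS" "x = (\<lambda>z. c *s z + t z)" unfolding carrier_RR by auto
  have c: "c \<noteq> 0" using ct x(2) by auto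
  have "x \<otimes>\<^bsub>RR\<^esub> (\<lambda>z. inverse c *s z) \<ominus>\<^bsub>RR\<^esub> \<one>\<^bsub>RR\<^esub> = (\<lambda>z. t (inverse c *s z))"
    using c ct RR_ainv[OF RR_id] by (simp add: a_minus_def id_def comp_def)
  moreover have "(\<lambda>z. t (inverse c *s z)) \<in> SS" by (rule SS_compR[OF Lin_sc ct(1)])
  ultimately show "\<exists>y\<in>carrier RR. x \<otimes>\<^bsub>RR\<^esub> y \<ominus>\<^bsub>RR\<^esub> \<one>\<^bsub>RR\<^esub> \<in> SS"
    using RR_sc by metis
qed

lemma almost_perfect: "right_almost_perfect RR" "left_almost_perfect RR"
proof -
  have "I = SS" if "ideal I RR" "I \<noteq> {\<zero>\<^bsub>RR\<^esub>}" "I \<noteq> carrier RR" for I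
    using ideal_cases[OF that(1)] that by auto
  then show "right_almost_perfect RR" "left_almost_perfect RR"
    unfolding right_almost_perfect_def left_almost_perfect_def
    using dl_perfect[OF quot_dl] by auto
qed

lemma e_props: assumes b: "b \<in> BB"
  shows "(\<lambda>x. coord x b *s b) \<in> SS" "(\<lambda>x. coord x b *s b) \<circ> (\<lambda>x. coord x b *s b) \<noteq> (\<lambda>_. 0)"
proof -
  show "(\<lambda>x. coord x b *s b) \<in> SS" by (rule SS_single)
  have "((\<lambda>x. coord x b *s b) \<circ> (\<lambda>x. coord x b *s b)) b = b"
    using b by (simp add: coord_scale coord_basis)
  then show "(\<lambda>x. coord x b *s b) \<circ> (\<lambda>x. coord x b *s b) \<noteq> (\<lambda>_. 0)"
    using BB_nz[OF b] by (metis)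
qed

lemma prime_RR: "prime_ring RR"
  unfolding prime_ring_def
proof (intro conjI allI impI)
  obtain b where b: "b \<in> BB" using ex_nz by auto
  show "\<zero>\<^bsub>RR\<^esub> \<noteq> \<one>\<^bsub>RR\<^esub>"
  proof
    assume "\<zero>\<^bsub>RR\<^esub> = \<one>\<^bsub>RR\<^esub>"
    then have "(\<lambda>_. 0) = (id :: 'b \<Rightarrow> 'b)" by simp
    then have "0 = b" by (metis id_apply)
    then show False using BB_nz[OF b] by simp
  qed
  fix A B assume h: "ideal A RR \<and> ideal B RR \<and> (\<forall>a\<in>A. \<forall>b\<in>B. a \<otimes>\<^bsub>RR\<^esub> b = \<zero>\<^bsub>RR\<^esub>)"
  show "A = {\<zero>\<^bsub>RR\<^esub>} \<or> B = {\<zero>\<^bsub>RR\<^esub>}"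
  proof (rule ccontr)
    assume "\<not> ?thesis"
    then have "SS \<subseteq> A" "SS \<subseteq> B" using ideal_cases h SS_sub by auto
    then show False using h e_props[OF b] by auto
  qed
qed

definition MM where "MM b = {f \<in> carrier RR. \<forall>x. coord (f x) b = 0}"

lemma coord_neg: "coord (- v) b = - coord v b"
  using coord_diff[of 0 v b] by (simp add: coord_zero)

lemma MM_right_ideal: "right_ideal (MM b) RR"
proof -
  interpret ring RR by (rule ring_RR)
  have "subgroup (MM b) (add_monoid RR)"
    apply (rule add.subgroupI)
    using SS_sub[OF SS_zero] by (auto simp: MM_def RR_ainv RR_neg RR_add coord_add coord_zero coord_neg)
  then show ?thesis unfolding right_ideal_def
    by (auto intro: additive_subgroupI simp: MM_def RR_mult[unfolded comp_def[symmetric]])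
qed

lemma MM_max: assumes b: "b \<in> BB" shows "maximal_right_ideal (MM b) RR"
  unfolding maximal_right_ideal_def
proof (intro conjI allI impI)
  show "right_ideal (MM b) RR" by (rule MM_right_ideal)
  show "MM b \<noteq> carrier RR"
  proof
    assume "MM b = carrier RR"
    then have "(\<lambda>x. x) \<in> MM b" using RR_id by simp
    then have "coord b b = 0" by (auto simp: MM_def)
    then show False using coord_basis[OF b, of b] by simp
  qed
  fix K assume K: "right_ideal K RR \<and> MM b \<subseteq> K \<and> K \<noteq> carrier RR"
  have sg: "additive_subgroup K RR" and cl: "\<And>a r. a \<in> K \<Longrightarrow> r \<in> carrier RR \<Longrightarrow> a \<otimes>\<^bsub>RR\<^esub> r \<in> K"
    using K by (auto simp: right_ideal_def)
  have sub: "K \<subseteq> carrier RR" using additive_subgroup.a_subset[OF sg] .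
  show "K = MM b"
  proof (rule ccontr)
    assume "K \<noteq> MM b"
    then obtain f where f: "f \<in> K" "f \<notin> MM b" using K by auto
    have fc: "f \<in> carrier RR" using f sub by auto
    then obtain u where u: "coord (f u) b \<noteq> 0" using f(2) by (auto simp: MM_def)
    define \<alpha> where "\<alpha> = coord (f u) b"
    define r where "r = (\<lambda>x. coord x b *s (inverse \<alpha> *s u))"
    define e where "e = (\<lambda>x. coord x b *s (inverse \<alpha> *s f u))"
    have rc: "r \<in> carrier RR" unfolding r_def by (rule SS_sub[OF SS_single])
    have ec: "e \<in> carrier RR" unfolding e_def by (rule SS_sub[OF SS_single])
    have fr: "f \<otimes>\<^bsub>RR\<^esub> r = e"
      using RR_Lin[OF fc] by (auto simp: r_def e_def Lin_iff)
    define m where "m = (\<lambda>x. x + - e x)"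
    have mc: "m \<in> carrier RR" unfolding m_def by (intro RR_add RR_id RR_neg ec)
    have "m \<in> MM b"
      using mc u by (simp add: MM_def m_def e_def coord_diff coord_scale \<alpha>_def)
    then have "m \<in> K" using K by auto
    moreover have "f \<otimes>\<^bsub>RR\<^esub> r \<in> K" using cl[OF f(1) rc] .
    ultimately have "m \<oplus>\<^bsub>RR\<^esub> (f \<otimes>\<^bsub>RR\<^esub> r) \<in> K" using additive_subgroup.a_closed[OF sg] by blast
    moreover have "\<And>x. f (r x) = e x" using fr by (metis RR_simps(1) comp_apply)
    ultimately have one: "(\<lambda>x. x) \<in> K" by (simp add: m_def)
    have "carrier RR \<subseteq> K"
    proof
      fix g assume "g \<in> carrier RR"
      from cl[OF one this] show "g \<in> K" by (simp add: comp_def)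
    qed
    then show False using K sub by auto
  qed
qed

lemma jacobson_RR: "jacobson RR = {\<zero>\<^bsub>RR\<^esub>}"
proof
  show "jacobson RR \<subseteq> {\<zero>\<^bsub>RR\<^esub>}"
  proof
    fix f assume f: "f \<in> jacobson RR"
    have "f \<in> MM b" if "b \<in> BB" for b using f MM_max[OF that] unfolding jacobson_def by blast
    then have "coord (f x) b = 0" for x b using coord_in by (auto simp: MM_def)
    then have "f = (\<lambda>_. 0)" using coord_ext by auto
    then show "f \<in> {\<zero>\<^bsub>RR\<^esub>}" by simp
  qed
  show "{\<zero>\<^bsub>RR\<^esub>} \<subseteq> jacobson RR"
    unfolding jacobson_def maximal_right_ideal_def right_ideal_def
    using SS_sub[OF SS_zero] additive_subgroup.zero_closed by fastforce
qed

abbreviation QQ where "QQ \<equiv> RR Quot {\<lambda>_. 0}"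

lemma rcos0: "{\<lambda>_. 0} +>\<^bsub>RR\<^esub> f = {f}"
  by (auto simp: a_r_coset_def r_coset_def)

lemma carrier_QQ: "carrier QQ = (\<lambda>a. {a}) ` carrier RR"
  by (auto simp: FactRing_def A_RCOSETS_def' rcos0)

lemma QQ_add: "{a} \<oplus>\<^bsub>QQ\<^esub> {b} = {\<lambda>x. a x + b x}"
  by (simp add: FactRing_def set_add_def')

lemma QQ_mult: "{a} \<otimes>\<^bsub>QQ\<^esub> {b} = {a \<circ> b}"
  by (simp add: FactRing_def rcoset_mult_def rcos0)

lemma QQ_one: "\<one>\<^bsub>QQ\<^esub> = {id}" by (simp add: FactRing_def rcos0)
lemma QQ_zero: "\<zero>\<^bsub>QQ\<^esub> = {\<lambda>_. 0}" by (simp add: FactRing_def)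

lemma ring_QQ: "ring QQ"
  using ideal.quotient_is_ring[OF ring.zeroideal[OF ring_RR]] by simp

lemma not_semilocal: "\<not> semilocal RR"
proof
  assume "semilocal RR"
  then have ss: "semisimple_artinian QQ" unfolding semilocal_def jacobson_RR by simp
  interpret Q: ring QQ by (rule ring_QQ)
  define S' where "S' = (\<lambda>s. {s}) ` SS"
  have ainv: "\<ominus>\<^bsub>QQ\<^esub> {s} = {\<lambda>x. - s x}" if "s \<in> SS" for s
  proof (rule Q.minus_equality)
    show "{\<lambda>x. - s x} \<oplus>\<^bsub>QQ\<^esub> {s} = \<zero>\<^bsub>QQ\<^esub>" by (simp add: QQ_add QQ_zero)
    show "{s} \<in> carrier QQ" using SS_sub[OF that] by (simp add: carrier_QQ)
    show "{\<lambda>x. - s x} \<in> carrier QQ" using RR_neg[OF SS_sub[OF that]] by (simp add: carrier_QQ)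
  qed
  have "subgroup S' (add_monoid QQ)"
  proof (rule Q.add.subgroupI)
    show "S' \<subseteq> carrier QQ" using SS_sub by (auto simp: S'_def carrier_QQ)
    show "S' \<noteq> {}" using SS_zero by (auto simp: S'_def)
  next
    fix a assume "a \<in> S'"
    then obtain s where s: "s \<in> SS" "a = {s}" by (auto simp: S'_def)
    have "{\<lambda>x. - s x} \<in> S'" using SS_neg[OF s(1)] by (simp add: S'_def)
    then show "\<ominus>\<^bsub>QQ\<^esub> a \<in> S'" using ainv[OF s(1)] s(2) by simp
  next
    fix a b assume "a \<in> S'" "b \<in> S'"
    then obtain s t where st: "s \<in> SS" "a = {s}" "t \<in> SS" "b = {t}" by (auto simp: S'_def)
    have "{\<lambda>x. s x + t x} \<in> S'" using SS_add[OF st(1) st(3)] by (simp add: S'_def)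
    then show "a \<oplus>\<^bsub>QQ\<^esub> b \<in> S'" using st by (simp add: QQ_add)
  qed
  moreover have "a \<otimes>\<^bsub>QQ\<^esub> r \<in> S'" if ar: "a \<in> S'" "r \<in> carrier QQ" for a r
  proof -
    obtain s where s: "s \<in> SS" "a = {s}" using ar(1) by (auto simp: S'_def)
    obtain g where g: "g \<in> carrier RR" "r = {g}" using ar(2) by (auto simp: carrier_QQ)
    have "(\<lambda>x. s (g x)) \<in> SS" by (rule SS_compR[OF RR_Lin[OF g(1)] s(1)])
    then have "{s \<circ> g} \<in> S'" by (simp add: S'_def comp_def)
    then show ?thesis using s g by (simp add: QQ_mult)
  qed
  ultimately have rS: "right_ideal S' QQ" unfolding right_ideal_def
    by (auto intro: additive_subgroupI)
  obtain K where K: "right_ideal K QQ" "S' \<inter> K = {\<zero>\<^bsub>QQ\<^esub>}"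
    "\<forall>x\<in>carrier QQ. \<exists>a\<in>S'. \<exists>b\<in>K. x = a \<oplus>\<^bsub>QQ\<^esub> b"
    using ss[unfolded semisimple_artinian_def, rule_format, OF rS] by blast
  have Ksub: "K \<subseteq> carrier QQ" using K(1) additive_subgroup.a_subset unfolding right_ideal_def by blast
  have Kcl: "\<And>a r. a \<in> K \<Longrightarrow> r \<in> carrier QQ \<Longrightarrow> a \<otimes>\<^bsub>QQ\<^esub> r \<in> K"
    using K(1) unfolding right_ideal_def by blast
  have "\<one>\<^bsub>QQ\<^esub> \<in> carrier QQ" by simp
  then obtain a b where ab: "a \<in> S'" "b \<in> K" "\<one>\<^bsub>QQ\<^esub> = a \<oplus>\<^bsub>QQ\<^esub> b" using K(3) by blast
  from ab obtain s where s: "s \<in> SS" "a = {s}" by (auto simp: S'_def)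
  from ab Ksub obtain t where t: "t \<in> carrier RR" "b = {t}" by (auto simp: carrier_QQ)
  have "id = (\<lambda>x. s x + t x)" using ab(3) s t by (simp add: QQ_one QQ_add)
  then have tx: "t x = x - s x" for x by (metis add_diff_cancel_left' id_apply)
  have "\<exists>v. v - s v \<noteq> 0"
  proof (rule ccontr)
    assume "\<not> ?thesis"
    then have "s = (\<lambda>x. x)" by auto
    then show False using s(1) id_notin_SS by simp
  qed
  then obtain v where v: "v - s v \<noteq> 0" by blast
  obtain b0 where b0: "b0 \<in> BB" using ex_nz by auto
  define r where "r = (\<lambda>x. coord x b0 *s v)"
  have rSS: "r \<in> SS" unfolding r_def by (rule SS_single)
  have "{t} \<otimes>\<^bsub>QQ\<^esub> {r} \<in> K" using Kcl[of "{t}" "{r}"] ab(2) t SS_sub[OF rSS] by (simp add: carrier_QQ)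
  then have inK: "{t \<circ> r} \<in> K" by (simp add: QQ_mult)
  have "(\<lambda>x. t (r x)) \<in> SS" by (rule SS_compL[OF RR_Lin[OF t(1)] rSS])
  then have "{t \<circ> r} \<in> S'" by (simp add: S'_def comp_def)
  with inK K(2) have "{t \<circ> r} = {\<lambda>_. 0}" by (auto simp: QQ_zero)
  then have "t (r b0) = 0" by (metis comp_apply singleton_inject)
  moreover have "t (r b0) = v - s v" using b0 by (simp add: r_def coord_basis tx)
  ultimately show False using v by simp
qed

lemma mainlemma: "{I. ideal I RR} = {{\<zero>\<^bsub>RR\<^esub>}, SS, carrier RR}
    \<and> prime_ring RR
    \<and> right_almost_perfect RR \<and> left_almost_perfect RR
    \<and> jacobson RR = {\<zero>\<^bsub>RR\<^esub>}
    \<and> \<not> semilocal RR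
    \<and> \<not> right_perfect RR \<and> \<not> left_perfect RR"
  using ideals_RR prime_RR almost_perfect jacobson_RR not_semilocal
  by (auto simp: right_perfect_def left_perfect_def)

end

theorem mainTheorem11:
  fixes scale :: "'k::field \<Rightarrow> 'v::ab_group_add \<Rightarrow> 'v"
  assumes "vector_space scale"
    and "\<not> (\<exists>B. finite B \<and> module.span scale B = UNIV)"
  defines "S \<equiv> fin_rank_endos scale" and "R \<equiv> k_plus_S_ring scale"
  shows "{I. ideal I R} = {{\<zero>\<^bsub>R\<^esub>}, S, carrier R}
    \<and> prime_ring R
    \<and> right_almost_perfect R \<and> left_almost_perfect R
    \<and> jacobson R = {\<zero>\<^bsub>R\<^esub>}
    \<and> \<not> semilocal R
    \<and> \<not> right_perfect R \<and> \<not> left_perfect R"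
proof -
  interpret ivs scale
    by (rule ivs.intro[OF assms(1)]) (rule ivs_axioms.intro, use assms(2) in simp)
  show ?thesis unfolding S_def R_def by (rule mainlemma)
qed

end
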